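(* Let $N\geq 3$ and let $(M,g)$ be an $N$-dimensional Riemannian model with pole $o$ and metric $ds^2=dr^2+\psi^2(r)\,d\omega^2$, where $\psi$ is a $C^\infty$ nonnegative function on $[0,+\infty)$, positive on $(0,+\infty)$, with $\psi'(0)=1$, $\psi^{(2k)}(0)=0$ for all $k\geq0$, and such that for all $r>0$: $K_{\pi,r}^{rad}\leq -1$ and $K_{\pi,r}^{rad}\geq H_{\pi,r}^{tan}$. Then for all $u\in C_c^\infty(M)$, $$\int_M(\Delta_{r,g}u)^2dv_g-\Big(\frac{N-1}{2}\Big)^2\int_M\Big(\frac{\partial u}{\partial r}\Big)^2dv_g\geq\frac14\int_M\frac1{r^2}\Big(\frac{\partial u}{\partial r}\Big)^2dv_g+\frac{N^2-1}{4}\int_M\frac1{\psi^2}\Big(\frac{\partial u}{\partial r}\Big)^2dv_g.$$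
   Context: $d\omega^2$ is the standard metric on $\mathbb{S}^{N-1}$, $r$ the geodesic distance from $o$, $\frac{\partial u}{\partial r}$ the radial derivative, $dv_g$ the Riemannian volume, $\Delta_{r,g}u=\frac{\partial^2u}{\partial r^2}+(N-1)\frac{\psi'}{\psi}\frac{\partial u}{\partial r}$, $K_{\pi,r}^{rad}=-\frac{\psi''}{\psi}$, $H_{\pi,r}^{tan}=-\frac{(\psi')^2-1}{\psi^2}$. *)

theory Defs
  imports "HOL-Analysis.Analysis"
begin

text \<open>C-infinity functions on a Euclidean space: there is a family D of all iterated
  partial derivatives (D ds is the partial derivative along the list ds of basis vectors),
  each of them continuous and differentiable with partial derivatives D (b # ds).\<close>
definition smooth_fun :: "('a::euclidean_space \<Rightarrow> real) \<Rightarrow> bool" where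
  "smooth_fun f \<longleftrightarrow> (\<exists>D :: 'a list \<Rightarrow> 'a \<Rightarrow> real. D [] = f \<and>
     (\<forall>ds x. (D ds has_derivative (\<lambda>h. \<Sum>b\<in>Basis. (h \<bullet> b) * D (b # ds) x)) (at x)) \<and>
     (\<forall>ds. continuous_on UNIV (D ds)))"

definition smooth_halfline_derivs :: "(nat \<Rightarrow> real \<Rightarrow> real) \<Rightarrow> bool" where
  "smooth_halfline_derivs Psi \<longleftrightarrow>
     (\<forall>k x. x \<ge> 0 \<longrightarrow> (Psi k has_real_derivative Psi (Suc k) x) (at x within {0..}))"

definition compact_support :: "('a::euclidean_space \<Rightarrow> real) \<Rightarrow> bool" where
  "compact_support u \<longleftrightarrow> compact (closure {x. u x \<noteq> 0})"

text \<open>The model manifold M is identified with R^N via polar coordinates about the pole o = 0: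
  a point x corresponds to r = norm x, omega = sgn x.\<close>

definition radial_d :: "('a::euclidean_space \<Rightarrow> real) \<Rightarrow> 'a \<Rightarrow> real" where
  "radial_d u x = deriv (\<lambda>t. u (t *\<^sub>R sgn x)) (norm x)"

definition radial_dd :: "('a::euclidean_space \<Rightarrow> real) \<Rightarrow> 'a \<Rightarrow> real" where
  "radial_dd u x = deriv (deriv (\<lambda>t. u (t *\<^sub>R sgn x))) (norm x)"

text \<open>Riemannian volume of the model dr^2 + psi(r)^2 domega^2 in these coordinates:
  dv_g = psi(r)^(N-1) dr domega = (psi(norm x)/norm x)^(N-1) dx.\<close>
definition model_vol :: "(real \<Rightarrow> real) \<Rightarrow> ('a::euclidean_space) measure" where
  "model_vol psi = density lborel
     (\<lambda>x. ennreal ((psi (norm x) / norm x) ^ (DIM('a) - 1)))"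

definition radial_laplacian ::
  "(real \<Rightarrow> real) \<Rightarrow> (real \<Rightarrow> real) \<Rightarrow> ('a::euclidean_space \<Rightarrow> real) \<Rightarrow> 'a \<Rightarrow> real" where
  "radial_laplacian psi psi' u x =
     radial_dd u x + real (DIM('a) - 1) * (psi' (norm x) / psi (norm x)) * radial_d u x"

definition K_rad :: "(real \<Rightarrow> real) \<Rightarrow> (real \<Rightarrow> real) \<Rightarrow> real \<Rightarrow> real" where
  "K_rad psi psi'' r = - psi'' r / psi r"

definition H_tan :: "(real \<Rightarrow> real) \<Rightarrow> (real \<Rightarrow> real) \<Rightarrow> real \<Rightarrow> real" where
  "H_tan psi psi' r = - ((psi' r)\<^sup>2 - 1) / (psi r)\<^sup>2"

end

theory Submission
  imports Defs
begin

lemma ln_interval_nn: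
  assumes "0 < a" "a \<le> b"
  shows "(\<integral>\<^sup>+t. ennreal (indicator {a..b} t / t) \<partial>lborel) = ennreal (ln b - ln a)"
proof -
  have "((\<lambda>t. 1 / t) has_integral (ln b - ln a)) {a..b}"
  proof (rule fundamental_theorem_of_calculus)
    show "a \<le> b" by fact
    fix x assume "x \<in> {a..b}"
    then have "x > 0" using assms by auto
    then show "(ln has_vector_derivative 1 / x) (at x within {a..b})"
      by (auto intro!: derivative_eq_intros simp: has_real_derivative_iff_has_vector_derivative[symmetric])
  qed
  from nn_integral_has_integral_lebesgue'[OF _ this]
  have "(\<integral>\<^sup>+t. ennreal (1 / t) * indicator {a..b} t \<partial>lborel) = ennreal (ln b - ln a)"
    using assms by auto
  then show ?thesis
    by (subst (asm) nn_integral_cong[where v="\<lambda>t. ennreal (indicator {a..b} t / t)"])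
       (auto simp: indicator_def)
qed

lemma scale_nn:
  fixes h :: "'a::euclidean_space \<Rightarrow> ennreal"
  assumes [measurable]: "h \<in> borel_measurable borel" and c: "c \<noteq> 0"
  shows "(\<integral>\<^sup>+y. h y \<partial>lborel) = ennreal (\<bar>c\<bar>^DIM('a)) * (\<integral>\<^sup>+x. h (c *\<^sub>R x) \<partial>lborel)"
  apply (subst lborel_affine[OF c, of 0])
  apply (simp add: nn_integral_density nn_integral_distr nn_integral_cmult)
  done

lemma ray_formula:
  fixes f :: "'a::euclidean_space \<Rightarrow> ennreal"
  assumes [measurable]: "f \<in> borel_measurable borel"
  shows "(\<integral>\<^sup>+x. f x \<partial>lborel) * ennreal (ln 2) =
    (\<integral>\<^sup>+y. indicator {y. 1 \<le> norm y \<and> norm y \<le> 2} y *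
        (\<integral>\<^sup>+t. indicator {0<..} t * f (t *\<^sub>R y) * ennreal (t ^ (DIM('a) - 1)) \<partial>lborel) \<partial>lborel)"
proof -
  let ?A = "{y::'a. 1 \<le> norm y \<and> norm y \<le> 2}"
  let ?N = "DIM('a)"
  have [measurable]: "?A \<in> sets borel" by measurable
  have "(\<integral>\<^sup>+y. indicator ?A y *
        (\<integral>\<^sup>+t. indicator {0<..} t * f (t *\<^sub>R y) * ennreal (t ^ (?N - 1)) \<partial>lborel) \<partial>lborel)
     = (\<integral>\<^sup>+y. (\<integral>\<^sup>+t. indicator ?A y * (indicator {0<..} t * f (t *\<^sub>R y) * ennreal (t ^ (?N - 1))) \<partial>lborel) \<partial>lborel)"
    by (simp add: nn_integral_cmult)
  also have "\<dots> = (\<integral>\<^sup>+t. (\<integral>\<^sup>+y. indicator ?A y * (indicator {0<..} t * f (t *\<^sub>R y) * ennreal (t ^ (?N - 1))) \<partial>lborel) \<partial>lborel)"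
    by (rule lborel_pair.Fubini'[symmetric]) measurable
  also have "\<dots> = (\<integral>\<^sup>+t. (\<integral>\<^sup>+x. f x * (indicator {s. norm x / 2 \<le> s \<and> s \<le> norm x} t * ennreal (1 / t)) \<partial>lborel) \<partial>lborel)"
  proof (rule nn_integral_cong)
    fix t :: real
    show "(\<integral>\<^sup>+y. indicator ?A y * (indicator {0<..} t * f (t *\<^sub>R y) * ennreal (t ^ (?N - 1))) \<partial>lborel) =
          (\<integral>\<^sup>+x. f x * (indicator {s. norm x / 2 \<le> s \<and> s \<le> norm x} t * ennreal (1 / t)) \<partial>lborel)"
    proof (cases "t > 0")
      case False
      then have "ennreal (1/t) = 0" by (intro ennreal_neg) simp
      then show ?thesis using False by (auto simp: indicator_def intro!: nn_integral_cong)
    next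
      case True
      have "(\<integral>\<^sup>+y. indicator ?A y * (indicator {0<..} t * f (t *\<^sub>R y) * ennreal (t ^ (?N - 1))) \<partial>lborel)
         = ennreal (\<bar>1/t\<bar>^?N) * (\<integral>\<^sup>+x. indicator ?A ((1/t) *\<^sub>R x) * (indicator {0<..} t * f (t *\<^sub>R ((1/t) *\<^sub>R x)) * ennreal (t ^ (?N - 1))) \<partial>lborel)"
        by (rule scale_nn) (use True in auto)
      also have "\<dots> = (\<integral>\<^sup>+x. ennreal (\<bar>1/t\<bar>^?N) * (indicator ?A ((1/t) *\<^sub>R x) * (indicator {0<..} t * f (t *\<^sub>R ((1/t) *\<^sub>R x)) * ennreal (t ^ (?N - 1)))) \<partial>lborel)"
        by (rule nn_integral_cmult[symmetric]) measurable
      also have "\<dots> = (\<integral>\<^sup>+x. f x * (indicator {s. norm x / 2 \<le> s \<and> s \<le> norm x} t * ennreal (1 / t)) \<partial>lborel)"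
      proof (rule nn_integral_cong)
        fix x :: 'a
        have N: "?N \<ge> 1" by (simp add: DIM_positive Suc_leI)
        have e: "\<bar>1/t\<bar>^?N * t ^ (?N - 1) = 1 / t"
        proof -
          obtain m where m: "?N = Suc m" using N by (cases "DIM('a)") auto
          show ?thesis using True unfolding m by (simp add: power_one_over field_simps)
        qed
        have i: "indicator ?A ((1/t) *\<^sub>R x) = (indicator {s. norm x / 2 \<le> s \<and> s \<le> norm x} t :: ennreal)"
        proof -
          have "norm ((1/t) *\<^sub>R x) = norm x / t" using True by simp
          then have "((1/t) *\<^sub>R x \<in> ?A) \<longleftrightarrow> (t \<in> {s. norm x / 2 \<le> s \<and> s \<le> norm x})"
            using True by (auto simp: field_simps)
          then show ?thesis unfolding indicator_def by simp
        qed
        show "ennreal (\<bar>1/t\<bar>^?N) * (indicator ?A ((1/t) *\<^sub>R x) * (indicator {0<..} t * f (t *\<^sub>R ((1/t) *\<^sub>R x)) * ennreal (t ^ (?N - 1))))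
           = f x * (indicator {s. norm x / 2 \<le> s \<and> s \<le> norm x} t * ennreal (1 / t))"
        proof -
          have tx: "t *\<^sub>R ((1/t) *\<^sub>R x) = x" using True by simp
          have ee: "ennreal (\<bar>1/t\<bar>^?N) * ennreal (t ^ (?N - 1)) = ennreal (1/t)"
          proof -
            have "ennreal (\<bar>1/t\<bar>^?N) * ennreal (t ^ (?N - 1)) = ennreal (\<bar>1/t\<bar>^?N * t ^ (?N - 1))"
              using True by (intro ennreal_mult[symmetric]) auto
            then show ?thesis by (simp only: e)
          qed
          have ind1: "indicator {0<..} t = (1::ennreal)" using True by simp
          show ?thesis unfolding i tx ind1 ee[symmetric] by (simp add: mult_ac)
        qed
      qed
      finally show ?thesis .
    qed
  qed
  also have "\<dots> = (\<integral>\<^sup>+x. (\<integral>\<^sup>+t. f x * (indicator {s. norm x / 2 \<le> s \<and> s \<le> norm x} t * ennreal (1 / t)) \<partial>lborel) \<partial>lborel)"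
    by (rule lborel_pair.Fubini') measurable
  also have "\<dots> = (\<integral>\<^sup>+x. f x * ennreal (ln 2) \<partial>lborel)"
  proof (rule nn_integral_cong_AE)
    show "AE x in lborel. (\<integral>\<^sup>+t. f x * (indicator {s. norm x / 2 \<le> s \<and> s \<le> norm x} t * ennreal (1 / t)) \<partial>lborel) = f x * ennreal (ln 2)"
      using AE_lborel_singleton[of 0]
    proof eventually_elim
      case (elim x)
      then have nx: "norm x > 0" by auto
      have "(\<integral>\<^sup>+t. f x * (indicator {s. norm x / 2 \<le> s \<and> s \<le> norm x} t * ennreal (1 / t)) \<partial>lborel)
          = f x * (\<integral>\<^sup>+t. ennreal (indicator {norm x / 2..norm x} t / t) \<partial>lborel)"
        by (subst nn_integral_cmult[symmetric]) (auto intro!: nn_integral_cong simp: indicator_def)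
      also have "\<dots> = f x * ennreal (ln (norm x) - ln (norm x / 2))"
        using nx by (subst ln_interval_nn) auto
      also have "ln (norm x) - ln (norm x / 2) = ln 2"
        using nx by (simp add: ln_div)
      finally show ?case .
    qed
  qed
  also have "\<dots> = (\<integral>\<^sup>+x. f x \<partial>lborel) * ennreal (ln 2)"
    by (rule nn_integral_multc) measurable
  finally show ?thesis ..
qed

lemma key_identity:
  fixes r P P1 P2 W W1 :: real and n :: nat
  assumes n: "n \<ge> 2" and r: "r \<noteq> 0" and P: "P \<noteq> 0"
  shows "P ^ n * (W1 + real n * (P1 / P) * W)\<^sup>2
       - P ^ n * W\<^sup>2 * ((real n / 2)\<^sup>2 + 1 / (4 * r\<^sup>2) + ((real n + 1)\<^sup>2 - 1) / (4 * P\<^sup>2))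
     = P ^ n * (W1 + (real n / 2) * (P1 / P) * W - W / (2 * r))\<^sup>2
       + (2 * W * W1 * P ^ n / (2 * r) + W\<^sup>2 * real n * P ^ (n - 1) * P1 / (2 * r)
          - W\<^sup>2 * P ^ n / (2 * r\<^sup>2)
          + (real n / 2) * (P2 * P ^ (n - 1) * W\<^sup>2 + real (n - 1) * P1\<^sup>2 * P ^ (n - 2) * W\<^sup>2
                            + 2 * P1 * P ^ (n - 1) * W * W1))
       + W\<^sup>2 * P ^ n * ((real n / 2)\<^sup>2 * (P2 / P - 1)
                      + ((real n / 2)\<^sup>2 + real n / 2) * ((P1\<^sup>2 - 1) / P\<^sup>2 - P2 / P))"
proof -
  obtain m where m: "n = m + 2" using n by (metis add.commute le_Suc_ex)
  have e1: "P ^ n = P\<^sup>2 * P ^ m" "P ^ (n - 1) = P * P ^ m" "P ^ (n - 2) = P ^ m"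
    "real (n - 1) = real m + 1" "real n = real m + 2"
    by (simp_all add: m power_add power2_eq_square)
  show ?thesis unfolding e1
    using r P by (simp add: field_simps power2_eq_square)
qed

lemma oneD:
  fixes p p1 p2 w w1 :: "real \<Rightarrow> real" and n :: nat and R M C :: real
  assumes n: "n \<ge> 2" and R: "R > 0"
    and dp: "\<And>r. r \<ge> 0 \<Longrightarrow> (p has_real_derivative p1 r) (at r within {0..})"
    and dp1: "\<And>r. r \<ge> 0 \<Longrightarrow> (p1 has_real_derivative p2 r) (at r within {0..})"
    and p0: "p 0 = 0" and p10: "p1 0 = 1" and ppos: "\<And>r. r > 0 \<Longrightarrow> p r > 0"
    and c1: "\<And>r. r > 0 \<Longrightarrow> p r \<le> p2 r"
    and c2: "\<And>r. r > 0 \<Longrightarrow> p2 r / p r \<le> ((p1 r)\<^sup>2 - 1) / (p r)\<^sup>2"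
    and dw: "\<And>r. (w has_real_derivative w1 r) (at r)"
    and cw1: "continuous_on UNIV w1"
    and wR: "\<And>r. r \<ge> R \<Longrightarrow> w r = 0 \<and> w1 r = 0"
    and Cw: "\<And>r. 0 \<le> r \<Longrightarrow> r \<le> R \<Longrightarrow> \<bar>w r\<bar> \<le> C \<and> \<bar>w1 r\<bar> \<le> C"
    and M: "\<And>r. 0 \<le> r \<Longrightarrow> r \<le> R \<Longrightarrow> p1 r \<le> M"
  defines "Pd \<equiv> \<lambda>r. p r ^ n * (w1 r + real n * (p1 r / p r) * w r)\<^sup>2"
      and "Qd \<equiv> \<lambda>r. p r ^ n * (w r)\<^sup>2 * ((real n / 2)\<^sup>2 + 1 / (4 * r\<^sup>2) + ((real n + 1)\<^sup>2 - 1) / (4 * (p r)\<^sup>2))"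
  shows "(\<integral>\<^sup>+r. indicator {0<..} r * ennreal (Qd r) \<partial>lborel) \<le> (\<integral>\<^sup>+r. indicator {0<..} r * ennreal (Pd r) \<partial>lborel)"
    and "(\<integral>\<^sup>+r. indicator {0<..} r * ennreal (Pd r) \<partial>lborel) \<le> ennreal (R * (M ^ n * R ^ (n - 2) * (C * R + real n * M * C)\<^sup>2))"
proof -
  define S where "S = {0<..<R}"
  have dp': "(p has_real_derivative p1 r) (at r)" if "r > 0" for r
    using dp[of r] that at_within_interior[of r "{0..}"] by simp
  have dp1': "(p1 has_real_derivative p2 r) (at r)" if "r > 0" for r
    using dp1[of r] that at_within_interior[of r "{0..}"] by simp
  have contp: "continuous_on {0..} p"
    by (rule DERIV_continuous_on[where D=p1]) (use dp in auto)
  have contp1: "continuous_on {0..} p1"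
    by (rule DERIV_continuous_on[where D=p2]) (use dp1 in auto)
  have contw: "continuous_on UNIV w"
    by (rule DERIV_continuous_on[where D=w1]) (use dw in auto)
  have p1ge: "p1 r \<ge> 1" if "r \<ge> 0" for r
  proof -
    have "p1 0 \<le> p1 r"
    proof (rule DERIV_nonneg_imp_increasing_open[OF that])
      fix x assume "0 < x" "x < r"
      then show "\<exists>y. DERIV p1 x :> y \<and> 0 \<le> y"
        using dp1' c1 ppos by (meson less_imp_le order_trans)
    next
      show "continuous_on {0..r} p1" using contp1 by (rule continuous_on_subset) auto
    qed
    then show ?thesis using p10 by simp
  qed
  have pge: "p r \<ge> r" if "r \<ge> 0" for r
  proof -
    have "p 0 - 0 \<le> p r - r"
    proof (rule DERIV_nonneg_imp_increasing_open[OF that])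
      fix x assume "0 < x" "x < r"
      then show "\<exists>y. DERIV (\<lambda>x. p x - x) x :> y \<and> 0 \<le> y"
        using p1ge by (intro exI[of _ "p1 x - 1"]) (auto intro!: derivative_eq_intros dp')
    next
      show "continuous_on {0..r} (\<lambda>x. p x - x)"
        using contp by (intro continuous_intros) (auto intro: continuous_on_subset)
    qed
    then show ?thesis using p0 by simp
  qed
  have ple: "p r \<le> M * r" if "r \<ge> 0" "r \<le> R" for r
  proof -
    have "M * 0 - p 0 \<le> M * r - p r"
    proof (rule DERIV_nonneg_imp_increasing_open[OF that(1)])
      fix x assume "0 < x" "x < r"
      then show "\<exists>y. DERIV (\<lambda>x. M * x - p x) x :> y \<and> 0 \<le> y"
        using M[of x] that by (intro exI[of _ "M - p1 x"]) (auto intro!: derivative_eq_intros dp')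
    next
      show "continuous_on {0..r} (\<lambda>x. M * x - p x)"
        using contp by (intro continuous_intros) (auto intro: continuous_on_subset)
    qed
    then show ?thesis using p0 by simp
  qed
  have M1: "M \<ge> 1" using M[of 0] p10 R by simp
  have C0: "C \<ge> 0" using Cw[of 0] R by auto
  define K0 where "K0 = M ^ n * R ^ (n - 2) * (C * R + real n * M * C)\<^sup>2"
  have Pd_nonneg: "Pd r \<ge> 0" if "r \<ge> 0" for r
    using that pge[OF that] unfolding Pd_def by (auto intro!: mult_nonneg_nonneg zero_le_power)
  have Pd_bound: "Pd r \<le> K0" if r: "r \<in> S" for r
  proof -
    from r have r0: "0 < r" and rR: "r < R" by (auto simp: S_def)
    have pr: "p r > 0" using ppos r0 by simp
    obtain m where m: "n = m + 2" using n by (metis add.commute le_Suc_ex)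
    have q: "p1 r / p r \<le> M / r"
    proof -
      have "p1 r * r \<le> M * p r"
        using M[of r] pge[of r] p1ge[of r] r0 rR M1 by (intro mult_mono) auto
      then show ?thesis using pr r0 by (simp add: field_simps)
    qed
    have q0: "0 \<le> p1 r / p r" using p1ge[of r] pr r0 by simp
    have h1: "\<bar>w1 r + real n * (p1 r / p r) * w r\<bar> \<le> C + real n * (M / r) * C"
    proof -
      have "\<bar>real n * (p1 r / p r) * w r\<bar> = real n * (p1 r / p r) * \<bar>w r\<bar>"
        using q0 pr p1ge[of r] r0 by (simp add: abs_mult)
      also have "\<dots> \<le> real n * (M / r) * C"
        using q q0 Cw[of r] r0 rR M1 by (intro mult_mono) auto
      finally show ?thesis using Cw[of r] r0 rR by linarith
    qed
    have h2: "(w1 r + real n * (p1 r / p r) * w r)\<^sup>2 \<le> (C + real n * (M / r) * C)\<^sup>2"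
      using h1 by (metis abs_le_square_iff abs_le_D2 abs_of_nonneg order_trans abs_ge_zero)
    have h3: "p r ^ n \<le> (M * r) ^ n"
      using ple[of r] pr r0 rR by (intro power_mono) auto
    have "Pd r \<le> (M * r) ^ n * (C + real n * (M / r) * C)\<^sup>2"
      unfolding Pd_def using h2 h3 pr M1 r0 by (intro mult_mono) auto
    also have "\<dots> = M ^ n * r ^ (n - 2) * (C * r + real n * M * C)\<^sup>2"
      using r0 unfolding m by (simp add: power_mult_distrib power2_eq_square field_simps)
    also have "\<dots> \<le> M ^ n * R ^ (n - 2) * (C * R + real n * M * C)\<^sup>2"
    proof -
      have "C * r + real n * M * C \<le> C * R + real n * M * C" using C0 rR by (simp add: mult_left_mono)
      then have "(C * r + real n * M * C)\<^sup>2 \<le> (C * R + real n * M * C)\<^sup>2"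
        using C0 r0 M1 by (intro power_mono) auto
      moreover have "r ^ (n - 2) \<le> R ^ (n - 2)" using r0 rR by (intro power_mono) auto
      ultimately show ?thesis using M1 r0 R by (intro mult_mono) auto
    qed
    finally show ?thesis unfolding K0_def .
  qed
  have Pd_cont: "continuous_on S Pd"
  proof -
    have cp: "continuous_on S p" using contp by (rule continuous_on_subset) (auto simp: S_def)
    have cp1: "continuous_on S p1" using contp1 by (rule continuous_on_subset) (auto simp: S_def)
    have cw: "continuous_on S w" using contw by (rule continuous_on_subset) auto
    have cw1': "continuous_on S w1" using cw1 by (rule continuous_on_subset) auto
    show ?thesis unfolding Pd_def
      using ppos by (intro continuous_intros cp cp1 cw cw1') (auto simp: S_def, metis less_irrefl)
  qed
  have Pd_int: "Pd integrable_on S"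
  proof (rule measurable_bounded_by_integrable_imp_integrable)
    show "Pd \<in> borel_measurable (lebesgue_on S)"
      using Pd_cont by (rule continuous_imp_measurable_on_sets_lebesgue) (auto simp: S_def)
    show "(\<lambda>_. K0) integrable_on S" unfolding S_def
      by (simp add: integrable_on_open_interval_real integrable_on_const)
    show "norm (Pd x) \<le> K0" if "x \<in> S" for x
      using Pd_bound[OF that] Pd_nonneg[of x] that by (auto simp: S_def)
  qed (auto simp: S_def)
  define IP where "IP = integral S Pd"
  have hP: "(Pd has_integral IP) S" using Pd_int by (simp add: IP_def has_integral_integral)
  have IP_le: "IP \<le> K0 * R"
  proof -
    have "((\<lambda>_. K0) has_integral (K0 * R)) S"
      using has_integral_const_real[of K0 0 R] R unfolding S_def has_integral_Icc_iff_Ioo[symmetric]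
      by (simp add: mult.commute)
    then show ?thesis using hP Pd_bound by (intro has_integral_le[OF hP]) auto
  qed
  define B where "B = (\<lambda>r. (w r)\<^sup>2 * p r ^ n / (2 * r) + (real n / 2) * p1 r * p r ^ (n - 1) * (w r)\<^sup>2)"
  define B' where "B' = (\<lambda>r. 2 * w r * w1 r * p r ^ n / (2 * r) + (w r)\<^sup>2 * real n * p r ^ (n - 1) * p1 r / (2 * r)
          - (w r)\<^sup>2 * p r ^ n / (2 * r\<^sup>2)
          + (real n / 2) * (p2 r * p r ^ (n - 1) * (w r)\<^sup>2 + real (n - 1) * (p1 r)\<^sup>2 * p r ^ (n - 2) * (w r)\<^sup>2
                            + 2 * p1 r * p r ^ (n - 1) * w r * w1 r))"
  have dB: "(B has_real_derivative B' r) (at r)" if r: "r > 0" for r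
  proof -
    obtain m where m: "n = m + 2" using n by (metis add.commute le_Suc_ex)
    have pr: "p r \<noteq> 0" using ppos[OF r] by simp
    show ?thesis unfolding B_def B'_def
      apply (rule derivative_eq_intros refl dp'[OF r] dp1'[OF r] dw | (use r in simp; fail))+
      using r pr unfolding m by (simp add: field_simps power2_eq_square)
  qed
  have contB: "continuous_on {0..R} B"
    unfolding continuous_on_eq_continuous_within
  proof
    fix x assume x: "x \<in> {0..R}"
    show "continuous (at x within {0..R}) B"
    proof (cases "x > 0")
      case True
      show ?thesis by (rule continuous_at_imp_continuous_within[OF DERIV_isCont[OF dB[OF True]]])
    next
      case False
      then have x0: "x = 0" using x by simp
      have Beq: "B = (\<lambda>r. (w r)\<^sup>2 * p r ^ (n - 1) * (p r / r) / 2 + (real n / 2) * p1 r * p r ^ (n - 1) * (w r)\<^sup>2)"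
      proof
        fix r
        have nn: "n = Suc (n - 1)" using n by simp
        have "p r ^ n = p r ^ (n - 1) * p r" by (subst nn) (simp add: mult.commute)
        then show "B r = (w r)\<^sup>2 * p r ^ (n - 1) * (p r / r) / 2 + (real n / 2) * p1 r * p r ^ (n - 1) * (w r)\<^sup>2"
          unfolding B_def by simp
      qed
      have lw: "(w \<longlongrightarrow> w 0) (at 0 within {0..R})"
        using contw by (meson UNIV_I continuous_on_def tendsto_within_subset subset_UNIV)
      have sub: "{0..R} \<subseteq> {0::real..}" by auto
      have lp: "(p \<longlongrightarrow> 0) (at 0 within {0..R})"
        using DERIV_continuous[OF dp[of 0]] p0 unfolding continuous_within
        by (auto intro: tendsto_within_subset[OF _ sub])
      have lp1: "(p1 \<longlongrightarrow> p1 0) (at 0 within {0..R})"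
        using DERIV_continuous[OF dp1[of 0]] unfolding continuous_within
        by (auto intro: tendsto_within_subset[OF _ sub])
      have lq: "((\<lambda>r. p r / r) \<longlongrightarrow> p1 0) (at 0 within {0..R})"
        using dp[of 0] p0 unfolding has_field_derivative_iff
        by (auto intro: tendsto_within_subset[OF _ sub])
      have T: "((\<lambda>r. (w r)\<^sup>2 * p r ^ (n - 1) * (p r / r) / 2 + (real n / 2) * p1 r * p r ^ (n - 1) * (w r)\<^sup>2)
          \<longlongrightarrow> (w 0)\<^sup>2 * 0 ^ (n - 1) * p1 0 / 2 + (real n / 2) * p1 0 * 0 ^ (n - 1) * (w 0)\<^sup>2) (at 0 within {0..R})"
        by (intro tendsto_intros lw lp lq lp1) auto
      have z: "(0::real) ^ (n - 1) = 0" using n by simp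
      have "(B \<longlongrightarrow> 0) (at 0 within {0..R})" using T unfolding Beq z by simp
      moreover have "B 0 = 0" using n by (simp add: B_def p0)
      ultimately show ?thesis unfolding x0 continuous_within by simp
    qed
  qed
  have B0: "B 0 = 0" using n by (simp add: B_def p0)
  have BR: "B R = 0" using wR[of R] by (simp add: B_def)
  have hB: "(B' has_integral 0) S"
  proof -
    have "(B' has_integral (B R - B 0)) {0..R}"
      by (rule fundamental_theorem_of_calculus_interior)
         (use R contB dB in \<open>auto simp: has_real_derivative_iff_has_vector_derivative[symmetric]\<close>)
    then show ?thesis by (simp add: B0 BR S_def has_integral_Icc_iff_Ioo)
  qed
  have hPB: "((\<lambda>r. Pd r - B' r) has_integral IP) S"
    using has_integral_diff[OF hP hB] by simp
  have QPB: "Qd r \<le> Pd r - B' r" if "r \<in> S" for r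
  proof -
    from that have r: "r > 0" by (simp add: S_def)
    have pr: "p r > 0" using ppos r by simp
    have id: "Pd r - Qd r = p r ^ n * (w1 r + (real n / 2) * (p1 r / p r) * w r - w r / (2 * r))\<^sup>2 + B' r
       + (w r)\<^sup>2 * p r ^ n * ((real n / 2)\<^sup>2 * (p2 r / p r - 1)
                      + ((real n / 2)\<^sup>2 + real n / 2) * (((p1 r)\<^sup>2 - 1) / (p r)\<^sup>2 - p2 r / p r))"
      unfolding Pd_def Qd_def B'_def using key_identity[OF n, of r "p r" "w1 r" "p1 r" "w r" "p2 r"] r pr
      by simp
    have a: "0 \<le> (real n / 2)\<^sup>2 * (p2 r / p r - 1)"
      using c1[OF r] pr by (simp add: field_simps mult_right_mono)
    have b: "0 \<le> ((real n / 2)\<^sup>2 + real n / 2) * (((p1 r)\<^sup>2 - 1) / (p r)\<^sup>2 - p2 r / p r)"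
      using c2[OF r] by (intro mult_nonneg_nonneg) auto
    have "0 \<le> (w r)\<^sup>2 * p r ^ n * ((real n / 2)\<^sup>2 * (p2 r / p r - 1)
                      + ((real n / 2)\<^sup>2 + real n / 2) * (((p1 r)\<^sup>2 - 1) / (p r)\<^sup>2 - p2 r / p r))"
      using a b pr by (intro mult_nonneg_nonneg) auto
    moreover have "0 \<le> p r ^ n * (w1 r + (real n / 2) * (p1 r / p r) * w r - w r / (2 * r))\<^sup>2"
      using pr by simp
    ultimately show ?thesis using id by linarith
  qed
  have Qd_nonneg: "Qd r \<ge> 0" if "r \<ge> 0" for r
    using that pge[OF that] unfolding Qd_def by (auto intro!: mult_nonneg_nonneg zero_le_power add_nonneg_nonneg)
  have eqP: "(\<integral>\<^sup>+r. indicator {0<..} r * ennreal (Pd r) \<partial>lborel) = ennreal IP"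
  proof -
    have "(\<integral>\<^sup>+r. indicator {0<..} r * ennreal (Pd r) \<partial>lborel) = (\<integral>\<^sup>+r. ennreal (Pd r) * indicator S r \<partial>lborel)"
    proof (rule nn_integral_cong)
      fix r :: real
      show "indicator {0<..} r * ennreal (Pd r) = ennreal (Pd r) * indicator S r"
        using wR[of r] by (cases "r \<ge> R") (auto simp: indicator_def S_def Pd_def)
    qed
    also have "\<dots> = ennreal IP"
      by (rule nn_integral_has_integral_lebesgue'[OF _ hP]) (use Pd_nonneg in \<open>auto simp: S_def\<close>)
    finally show ?thesis .
  qed
  show "(\<integral>\<^sup>+r. indicator {0<..} r * ennreal (Qd r) \<partial>lborel) \<le> (\<integral>\<^sup>+r. indicator {0<..} r * ennreal (Pd r) \<partial>lborel)"
  proof -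
    have "(\<integral>\<^sup>+r. indicator {0<..} r * ennreal (Qd r) \<partial>lborel) \<le> (\<integral>\<^sup>+r. ennreal (Pd r - B' r) * indicator S r \<partial>lborel)"
    proof (rule nn_integral_mono)
      fix r :: real
      show "indicator {0<..} r * ennreal (Qd r) \<le> ennreal (Pd r - B' r) * indicator S r"
      proof (cases "r \<in> S")
        case True
        then show ?thesis using QPB[OF True] by (auto simp: indicator_def S_def intro: ennreal_leI)
      next
        case False
        then show ?thesis using wR[of r] by (cases "r \<ge> R") (auto simp: indicator_def S_def Qd_def)
      qed
    qed
    also have "\<dots> = ennreal IP"
    proof (rule nn_integral_has_integral_lebesgue'[OF _ hPB])
      fix r assume "r \<in> S"
      then show "0 \<le> Pd r - B' r" using QPB[of r] Qd_nonneg[of r] by (auto simp: S_def)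
    qed
    finally show ?thesis using eqP by simp
  qed
  show "(\<integral>\<^sup>+r. indicator {0<..} r * ennreal (Pd r) \<partial>lborel) \<le> ennreal (R * (M ^ n * R ^ (n - 2) * (C * R + real n * M * C)\<^sup>2))"
    using IP_le unfolding eqP K0_def by (intro ennreal_leI) (simp add: mult.commute)
qed

lemma ray_deriv:
  fixes F :: "'a::euclidean_space \<Rightarrow> real" and G :: "'a \<Rightarrow> 'a \<Rightarrow> real"
  assumes dF: "\<And>x. (F has_derivative (\<lambda>h. \<Sum>b\<in>Basis. (h \<bullet> b) * G b x)) (at x)"
  shows "((\<lambda>t. F (t *\<^sub>R \<omega>)) has_real_derivative (\<Sum>b\<in>Basis. (\<omega> \<bullet> b) * G b (s *\<^sub>R \<omega>))) (at s)"
proof -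
  have l: "((\<lambda>t. t *\<^sub>R \<omega>) has_derivative (\<lambda>h. h *\<^sub>R \<omega>)) (at s)"
    by (intro derivative_eq_intros) auto
  have "((\<lambda>t. F (t *\<^sub>R \<omega>)) has_derivative (\<lambda>h. (\<Sum>b\<in>Basis. (\<omega> \<bullet> b) * G b (s *\<^sub>R \<omega>)) * h)) (at s)"
    using has_derivative_compose[OF l dF]
    by (rule has_derivative_eq_rhs) (simp add: fun_eq_iff sum_distrib_left mult_ac)
  then show ?thesis unfolding has_field_derivative_def by (simp add: mult.commute[of _ "\<Sum>b\<in>Basis. _"])
qed

lemma deriv_zero_outside:
  fixes F :: "'a::euclidean_space \<Rightarrow> real"
  assumes U: "open U" "x \<in> U" and F0: "\<And>z. z \<in> U \<Longrightarrow> F z = 0"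
    and dF: "(F has_derivative (\<lambda>h. \<Sum>b\<in>Basis. (h \<bullet> b) * g b)) (at x)" and b: "b \<in> Basis"
  shows "g b = 0"
proof -
  have "((\<lambda>z. 0) has_derivative (\<lambda>h. 0)) (at x)" by simp
  then have "(F has_derivative (\<lambda>h. 0)) (at x)"
    by (rule has_derivative_transform_within_open[OF _ U]) (use F0 in auto)
  from has_derivative_unique[OF dF this]
  have "(\<lambda>h. \<Sum>b\<in>Basis. (h \<bullet> b) * g b) = (\<lambda>h. 0)" .
  then have "(\<Sum>b'\<in>Basis. (b \<bullet> b') * g b') = 0" by meson
  moreover have "(\<Sum>b'\<in>Basis. (b \<bullet> b') * g b') = g b"
  proof -
    have "(\<Sum>b'\<in>Basis. (b \<bullet> b') * g b') = (\<Sum>b'\<in>Basis. if b' = b then g b' else 0)"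
      by (rule sum.cong) (use b in \<open>auto simp: inner_Basis\<close>)
    then show ?thesis using b by simp
  qed
  ultimately show ?thesis by simp
qed

lemma ray_sub:
  fixes h :: "'a::euclidean_space \<Rightarrow> real"
  assumes [measurable]: "h \<in> borel_measurable borel" and y: "y \<noteq> 0"
  shows "(\<integral>\<^sup>+t. indicator {0<..} t * ennreal (h (t *\<^sub>R y)) * ennreal (t ^ k) \<partial>lborel)
       = ennreal (1 / norm y) * (\<integral>\<^sup>+r. indicator {0<..} r * ennreal (h (r *\<^sub>R sgn y)) * ennreal ((r / norm y) ^ k) \<partial>lborel)"
proof -
  define \<rho> where "\<rho> = norm y"
  have \<rho>: "\<rho> > 0" using y by (simp add: \<rho>_def)
  define H where "H = (\<lambda>r. indicator {0<..} r * ennreal (h (r *\<^sub>R sgn y)) * ennreal ((r / \<rho>) ^ k))"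
  have [measurable]: "H \<in> borel_measurable borel" unfolding H_def by measurable
  have "(\<integral>\<^sup>+r. H r \<partial>lborel) = ennreal \<bar>\<rho>\<bar> * (\<integral>\<^sup>+x. H (0 + \<rho> * x) \<partial>lborel)"
    by (rule nn_integral_real_affine) (use \<rho> in auto)
  also have "(\<lambda>x. H (0 + \<rho> * x)) = (\<lambda>t. indicator {0<..} t * ennreal (h (t *\<^sub>R y)) * ennreal (t ^ k))"
  proof
    fix t
    have e1: "(\<rho> * t) *\<^sub>R sgn y = t *\<^sub>R y" using \<rho> by (simp add: \<rho>_def sgn_div_norm)
    have e2: "indicator {0<..} (\<rho> * t) = (indicator {0<..} t :: ennreal)"
      using \<rho> by (simp add: indicator_def zero_less_mult_iff)
    show "H (0 + \<rho> * t) = indicator {0<..} t * ennreal (h (t *\<^sub>R y)) * ennreal (t ^ k)"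
      unfolding H_def using \<rho> by (simp add: e1 e2)
  qed
  finally have "(\<integral>\<^sup>+r. H r \<partial>lborel) = ennreal \<rho> * (\<integral>\<^sup>+t. indicator {0<..} t * ennreal (h (t *\<^sub>R y)) * ennreal (t ^ k) \<partial>lborel)"
    using \<rho> by simp
  then have "ennreal (1 / \<rho>) * (\<integral>\<^sup>+r. H r \<partial>lborel) = (ennreal (1 / \<rho>) * ennreal \<rho>) * (\<integral>\<^sup>+t. indicator {0<..} t * ennreal (h (t *\<^sub>R y)) * ennreal (t ^ k) \<partial>lborel)"
    by (simp add: mult.assoc)
  also have "ennreal (1 / \<rho>) * ennreal \<rho> = 1"
    using \<rho> by (simp flip: ennreal_mult)
  finally show ?thesis unfolding H_def \<rho>_def by simp
qed

lemma ray_sub2: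
  fixes h :: "'a::euclidean_space \<Rightarrow> real" and H :: "real \<Rightarrow> real"
  assumes [measurable]: "h \<in> borel_measurable borel" and y: "y \<noteq> 0"
    and h0: "\<And>x. 0 \<le> h x"
    and hH: "\<And>r. 0 < r \<Longrightarrow> h (r *\<^sub>R sgn y) * (r / norm y) ^ k = H r / norm y ^ k"
  shows "(\<integral>\<^sup>+t. indicator {0<..} t * ennreal (h (t *\<^sub>R y)) * ennreal (t ^ k) \<partial>lborel)
       = ennreal (1 / norm y) * ((\<integral>\<^sup>+r. indicator {0<..} r * ennreal (H r) \<partial>lborel) * ennreal (1 / norm y ^ k))"
proof -
  define \<rho> where "\<rho> = norm y"
  have \<rho>: "\<rho> > 0" using y by (simp add: \<rho>_def)
  have Hr: "H r = h (r *\<^sub>R sgn y) * (r / \<rho>) ^ k * \<rho> ^ k" if "r > 0" for r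
    using hH[OF that] \<rho> unfolding \<rho>_def[symmetric] by (simp add: field_simps)
  have eqH: "(\<lambda>r. indicator {0<..} r * ennreal (H r)) = (\<lambda>r. indicator {0<..} r * ennreal (h (r *\<^sub>R sgn y) * (r / \<rho>) ^ k * \<rho> ^ k))"
    by (auto simp: indicator_def Hr)
  have "(\<integral>\<^sup>+t. indicator {0<..} t * ennreal (h (t *\<^sub>R y)) * ennreal (t ^ k) \<partial>lborel)
       = ennreal (1 / norm y) * (\<integral>\<^sup>+r. indicator {0<..} r * ennreal (h (r *\<^sub>R sgn y)) * ennreal ((r / norm y) ^ k) \<partial>lborel)"
    by (rule ray_sub) (use y in auto)
  also have "(\<integral>\<^sup>+r. indicator {0<..} r * ennreal (h (r *\<^sub>R sgn y)) * ennreal ((r / norm y) ^ k) \<partial>lborel)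
      = (\<integral>\<^sup>+r. indicator {0<..} r * ennreal (H r) * ennreal (1 / \<rho> ^ k) \<partial>lborel)"
  proof (rule nn_integral_cong)
    fix r :: real
    show "indicator {0<..} r * ennreal (h (r *\<^sub>R sgn y)) * ennreal ((r / norm y) ^ k) =
          indicator {0<..} r * ennreal (H r) * ennreal (1 / \<rho> ^ k)"
    proof (cases "r > 0")
      case True
      have "ennreal (h (r *\<^sub>R sgn y)) * ennreal ((r / norm y) ^ k) = ennreal (h (r *\<^sub>R sgn y) * (r / norm y) ^ k)"
        using True \<rho> h0 by (simp add: ennreal_mult \<rho>_def)
      also have "\<dots> = ennreal (H r / \<rho> ^ k)" using hH[OF True] by (simp add: \<rho>_def)
      also have "\<dots> = ennreal (H r) * ennreal (1 / \<rho> ^ k)"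
      proof -
        have "H r \<ge> 0" using Hr[OF True] h0 \<rho> True by simp
        then show ?thesis using \<rho> by (simp add: ennreal_mult[symmetric] divide_inverse)
      qed
      finally show ?thesis by (simp add: mult.assoc)
    qed (simp add: indicator_def)
  qed
  also have "\<dots> = (\<integral>\<^sup>+r. indicator {0<..} r * ennreal (H r) \<partial>lborel) * ennreal (1 / \<rho> ^ k)"
    by (rule nn_integral_multc) (unfold eqH, measurable)
  finally show ?thesis unfolding \<rho>_def .
qed

theorem corollary2p6:
  fixes \<psi> :: "real \<Rightarrow> real" and \<Psi> :: "nat \<Rightarrow> real \<Rightarrow> real"
    and u :: "real ^ 'n \<Rightarrow> real"
  assumes N3: "CARD('n) \<ge> 3"
    and smooth_psi: "smooth_halfline_derivs \<Psi>" and psi_def: "\<Psi> 0 = \<psi>"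
    and nonneg: "\<forall>r\<ge>0. \<psi> r \<ge> 0" and pos: "\<forall>r>0. \<psi> r > 0"
    and d1: "\<Psi> 1 0 = 1" and even: "\<forall>k. \<Psi> (2 * k) 0 = 0"
    and curv1: "\<forall>r>0. K_rad \<psi> (\<Psi> 2) r \<le> -1"
    and curv2: "\<forall>r>0. K_rad \<psi> (\<Psi> 2) r \<ge> H_tan \<psi> (\<Psi> 1) r"
    and u_smooth: "smooth_fun u" and u_supp: "compact_support u"
  shows "(\<integral>x. (radial_laplacian \<psi> (\<Psi> 1) u x)\<^sup>2 \<partial>model_vol \<psi>)
           - ((real CARD('n) - 1) / 2)\<^sup>2 * (\<integral>x. (radial_d u x)\<^sup>2 \<partial>model_vol \<psi>)
         \<ge> 1/4 * (\<integral>x. (1 / (norm x)\<^sup>2) * (radial_d u x)\<^sup>2 \<partial>model_vol \<psi>)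
           + ((real CARD('n))\<^sup>2 - 1) / 4
             * (\<integral>x. (1 / (\<psi> (norm x))\<^sup>2) * (radial_d u x)\<^sup>2 \<partial>model_vol \<psi>)"
proof -
  define n where "n = CARD('n) - 1"
  have n2: "n \<ge> 2" using N3 by (simp add: n_def)
  have Nn: "real CARD('n) = real n + 1" using N3 by (simp add: n_def)
  have DIMn: "DIM(real ^ 'n) - 1 = n" by (simp add: n_def)
  define \<psi>1 where "\<psi>1 = \<Psi> 1"
  define \<psi>2 where "\<psi>2 = \<Psi> 2"
  have dp: "(\<psi> has_real_derivative \<psi>1 r) (at r within {0..})" if "r \<ge> 0" for r
    using smooth_psi that unfolding smooth_halfline_derivs_def \<psi>1_def psi_def[symmetric]
    by (metis One_nat_def)
  have dp1: "(\<psi>1 has_real_derivative \<psi>2 r) (at r within {0..})" if "r \<ge> 0" for r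
    using smooth_psi that unfolding smooth_halfline_derivs_def \<psi>1_def \<psi>2_def
    by (metis One_nat_def Suc_1)
  have p0: "\<psi> 0 = 0" using even[rule_format, of 0] psi_def by simp
  have p10: "\<psi>1 0 = 1" using d1 by (simp add: \<psi>1_def)
  have ppos: "\<And>r. r > 0 \<Longrightarrow> \<psi> r > 0" using pos by simp
  have c1: "\<psi> r \<le> \<psi>2 r" if r: "r > 0" for r
  proof -
    have "- \<psi>2 r / \<psi> r \<le> -1" using curv1 r by (simp add: K_rad_def \<psi>2_def)
    then show ?thesis using ppos[OF r] by (simp add: field_simps)
  qed
  have c2: "\<psi>2 r / \<psi> r \<le> ((\<psi>1 r)\<^sup>2 - 1) / (\<psi> r)\<^sup>2" if r: "r > 0" for r
  proof -
    have "- ((\<psi>1 r)\<^sup>2 - 1) / (\<psi> r)\<^sup>2 \<le> - \<psi>2 r / \<psi> r" using curv2 r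
      unfolding K_rad_def H_tan_def \<psi>2_def \<psi>1_def by blast
    then show ?thesis unfolding minus_divide_left[symmetric] by linarith
  qed
  have contp: "continuous_on {0..} \<psi>"
    by (rule DERIV_continuous_on[where D=\<psi>1]) (use dp in auto)
  have contp1: "continuous_on {0..} \<psi>1"
    by (rule DERIV_continuous_on[where D=\<psi>2]) (use dp1 in auto)
  obtain D :: "(real^'n) list \<Rightarrow> real^'n \<Rightarrow> real" where D0: "D [] = u"
    and dD: "\<And>ds x. (D ds has_derivative (\<lambda>h. \<Sum>b\<in>Basis. (h \<bullet> b) * D (b # ds) x)) (at x)"
    and cD: "\<And>ds. continuous_on UNIV (D ds)"
    using u_smooth unfolding smooth_fun_def by blast
  define wv where "wv = (\<lambda>\<omega> s. \<Sum>b\<in>Basis. (\<omega> \<bullet> b) * D [b] (s *\<^sub>R \<omega>))"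
  define w1v where "w1v = (\<lambda>\<omega> s. \<Sum>b\<in>Basis. (\<omega> \<bullet> b) * (\<Sum>c\<in>Basis. (\<omega> \<bullet> c) * D [c, b] (s *\<^sub>R \<omega>)))"
  have F1: "((\<lambda>t. u (t *\<^sub>R \<omega>)) has_real_derivative wv \<omega> s) (at s)" for \<omega> s
    unfolding wv_def using ray_deriv[of "D []" "\<lambda>b. D [b]", OF dD] D0 by simp
  have F2: "(wv \<omega> has_real_derivative w1v \<omega> s) (at s)" for \<omega> s
    unfolding wv_def w1v_def
    by (intro DERIV_sum DERIV_cmult ray_deriv[of "D [_]" "\<lambda>c. D [c, _]", OF dD])
  have rd: "radial_d u x = wv (sgn x) (norm x)" for x
    unfolding radial_d_def by (rule DERIV_imp_deriv[OF F1])
  have rdd: "radial_dd u x = w1v (sgn x) (norm x)" for x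
  proof -
    have "deriv (\<lambda>t. u (t *\<^sub>R sgn x)) = wv (sgn x)"
      using DERIV_imp_deriv[OF F1] by blast
    then show ?thesis unfolding radial_dd_def using DERIV_imp_deriv[OF F2] by simp
  qed
  have cD': "continuous_on UNIV (\<lambda>s. D ds (s *\<^sub>R \<omega>))" for ds \<omega>
  proof -
    have "continuous_on UNIV (\<lambda>s::real. s *\<^sub>R \<omega>)" by (intro continuous_intros)
    from continuous_on_compose2[OF cD[of ds] this] show ?thesis by simp
  qed
  have cw: "continuous_on UNIV (wv \<omega>)" for \<omega>
    by (rule DERIV_continuous_on[where D="w1v \<omega>"]) (use F2 in auto)
  have cw1: "continuous_on UNIV (w1v \<omega>)" for \<omega>
    unfolding w1v_def by (intro continuous_intros cD')
  define K where "K = closure {x. u x \<noteq> 0}"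
  have "bounded K" using u_supp unfolding compact_support_def K_def by (rule compact_imp_bounded)
  then obtain R0 where R0: "R0 > 0" "K \<subseteq> ball 0 R0" using bounded_subset_ballD by blast
  have uK: "u z = 0" if "z \<notin> K" for z
  proof (rule ccontr)
    assume "u z \<noteq> 0"
    then have "z \<in> {x. u x \<noteq> 0}" by simp
    then have "z \<in> K" unfolding K_def using closure_subset by (rule subsetD[rotated])
    then show False using that by contradiction
  qed
  have oK: "open (- K)" unfolding K_def by (intro open_Compl closed_closure)
  have D1z: "D [b] z = 0" if "z \<notin> K" "b \<in> Basis" for z b
  proof (rule deriv_zero_outside[of "- K" z "D []" "\<lambda>b. D [b] z"])
    show "open (- K)" using oK .
    show "z \<in> - K" using that by simp
    show "D [] y = 0" if "y \<in> - K" for y using that uK D0 by simp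
    show "(D [] has_derivative (\<lambda>h. \<Sum>b\<in>Basis. h \<bullet> b * D [b] z)) (at z)" using dD[of "[]" z] .
  qed (use that in simp)
  have D2z: "D [c, b] z = 0" if "z \<notin> K" "b \<in> Basis" "c \<in> Basis" for z b c
  proof (rule deriv_zero_outside[of "- K" z "D [b]" "\<lambda>c. D [c, b] z"])
    show "open (- K)" using oK .
    show "z \<in> - K" using that by simp
    show "D [b] y = 0" if "y \<in> - K" for y using that D1z \<open>b \<in> Basis\<close> by simp
    show "(D [b] has_derivative (\<lambda>h. \<Sum>c\<in>Basis. h \<bullet> c * D [c, b] z)) (at z)" using dD[of "[b]" z] .
  qed (use that in simp)
  have wz: "wv \<omega> s = 0 \<and> w1v \<omega> s = 0" if "norm \<omega> = 1" "s \<ge> R0" for \<omega> s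
  proof -
    have "s *\<^sub>R \<omega> \<notin> K" using R0 that by auto
    then show ?thesis unfolding wv_def w1v_def using D1z D2z by simp
  qed
  have "\<forall>ds. \<exists>B. \<forall>x\<in>cball 0 R0. \<bar>D ds x\<bar> \<le> B"
  proof
    fix ds
    have "compact (D ds ` cball 0 R0)"
      by (rule compact_continuous_image[OF continuous_on_subset[OF cD] compact_cball]) simp
    then have "bounded (D ds ` cball 0 R0)" by (rule compact_imp_bounded)
    then show "\<exists>B. \<forall>x\<in>cball 0 R0. \<bar>D ds x\<bar> \<le> B" unfolding bounded_iff by auto
  qed
  then obtain Bd where Bd: "\<And>ds x. x \<in> cball 0 R0 \<Longrightarrow> \<bar>D ds x\<bar> \<le> Bd ds" by metis
  have Bd0: "Bd ds \<ge> 0" for ds using Bd[of 0 ds] R0 by auto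
  define C where "C = (\<Sum>b\<in>Basis. Bd [b]) + (\<Sum>b\<in>Basis. \<Sum>c\<in>Basis. Bd [c, b])"
  have Cw: "\<bar>wv \<omega> s\<bar> \<le> C \<and> \<bar>w1v \<omega> s\<bar> \<le> C" if \<omega>: "norm \<omega> = 1" and s: "0 \<le> s" "s \<le> R0" for \<omega> s
  proof -
    have x: "s *\<^sub>R \<omega> \<in> cball 0 R0" using \<omega> s by simp
    have ob: "\<bar>\<omega> \<bullet> b\<bar> \<le> 1" if "b \<in> Basis" for b using Basis_le_norm[OF that, of \<omega>] \<omega> by simp
    have t1: "\<bar>(\<omega> \<bullet> b) * D ds (s *\<^sub>R \<omega>)\<bar> \<le> Bd ds" if "b \<in> Basis" for b ds
    proof -
      have "\<bar>(\<omega> \<bullet> b) * D ds (s *\<^sub>R \<omega>)\<bar> = \<bar>\<omega> \<bullet> b\<bar> * \<bar>D ds (s *\<^sub>R \<omega>)\<bar>" by (simp add: abs_mult)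
      also have "\<dots> \<le> 1 * Bd ds" using ob[OF that] Bd[OF x, of ds] by (intro mult_mono) auto
      finally show ?thesis by simp
    qed
    have s1: "\<bar>wv \<omega> s\<bar> \<le> (\<Sum>b\<in>Basis. Bd [b])"
      unfolding wv_def by (rule order_trans[OF sum_abs sum_mono]) (use t1 in auto)
    have s2: "\<bar>w1v \<omega> s\<bar> \<le> (\<Sum>b\<in>Basis. \<Sum>c\<in>Basis. Bd [c, b])"
      unfolding w1v_def
    proof (rule order_trans[OF sum_abs sum_mono])
      fix b :: "real^'n" assume b: "b \<in> Basis"
      have "\<bar>\<Sum>c\<in>Basis. (\<omega> \<bullet> c) * D [c, b] (s *\<^sub>R \<omega>)\<bar> \<le> (\<Sum>c\<in>Basis. Bd [c, b])"
        by (rule order_trans[OF sum_abs sum_mono]) (use t1 in auto)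
      then show "\<bar>(\<omega> \<bullet> b) * (\<Sum>c\<in>Basis. (\<omega> \<bullet> c) * D [c, b] (s *\<^sub>R \<omega>))\<bar> \<le> (\<Sum>c\<in>Basis. Bd [c, b])"
        using ob[OF b] by (simp add: abs_mult mult_le_one order_trans[OF mult_right_mono] del: sum_abs)
    qed
    have p1: "0 \<le> (\<Sum>b\<in>Basis. Bd [b])" by (intro sum_nonneg Bd0)
    have p2: "0 \<le> (\<Sum>b\<in>Basis. \<Sum>c\<in>Basis. Bd [c, b])" by (intro sum_nonneg Bd0)
    show ?thesis using s1 s2 p1 p2 unfolding C_def by linarith
  qed
  have "compact (\<psi>1 ` {0..R0})"
    by (rule compact_continuous_image[OF continuous_on_subset[OF contp1]]) auto
  then have "bounded (\<psi>1 ` {0..R0})" by (rule compact_imp_bounded)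
  then obtain M where M': "\<forall>x\<in>\<psi>1 ` {0..R0}. norm x \<le> M" unfolding bounded_iff by blast
  have M: "\<psi>1 r \<le> M" if "0 \<le> r" "r \<le> R0" for r
  proof -
    have "\<bar>\<psi>1 r\<bar> \<le> M" using M' that by auto
    then show ?thesis by linarith
  qed

  define Pd where "Pd = (\<lambda>\<omega> r. \<psi> r ^ n * (w1v \<omega> r + real n * (\<psi>1 r / \<psi> r) * wv \<omega> r)\<^sup>2)"
  define Qd where "Qd = (\<lambda>\<omega> r. \<psi> r ^ n * (wv \<omega> r)\<^sup>2 * ((real n / 2)\<^sup>2 + 1 / (4 * r\<^sup>2) + ((real n + 1)\<^sup>2 - 1) / (4 * (\<psi> r)\<^sup>2)))"
  define Kc where "Kc = R0 * (M ^ n * R0 ^ (n - 2) * (C * R0 + real n * M * C)\<^sup>2)"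
  have one: "(\<integral>\<^sup>+r. indicator {0<..} r * ennreal (Qd \<omega> r) \<partial>lborel) \<le> (\<integral>\<^sup>+r. indicator {0<..} r * ennreal (Pd \<omega> r) \<partial>lborel)
     \<and> (\<integral>\<^sup>+r. indicator {0<..} r * ennreal (Pd \<omega> r) \<partial>lborel) \<le> ennreal Kc" if \<omega>: "norm \<omega> = 1" for \<omega>
    using oneD[of n R0 \<psi> \<psi>1 \<psi>2 "wv \<omega>" "w1v \<omega>" C M, OF n2 R0(1) dp dp1 p0 p10 ppos c1 c2 F2 cw1 wz[OF \<omega>] Cw[OF \<omega>] M]
    unfolding Pd_def Qd_def Kc_def by auto

  have [measurable]: "D ds \<in> borel_measurable borel" for ds
    using cD by (rule borel_measurable_continuous_onI)
  have mpn: "(\<lambda>x::real^'n. f (norm x)) \<in> borel_measurable borel" if cf: "continuous_on {0..} f" for f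
  proof (rule borel_measurable_continuous_onI)
    show "continuous_on UNIV (\<lambda>x::real^'n. f (norm x))"
      by (rule continuous_on_compose2[OF cf]) (auto intro: continuous_intros)
  qed
  have [measurable]: "(\<lambda>x::real^'n. \<psi> (norm x)) \<in> borel_measurable borel" by (rule mpn[OF contp])
  have [measurable]: "(\<lambda>x::real^'n. \<Psi> 1 (norm x)) \<in> borel_measurable borel"
    using mpn[OF contp1] by (simp add: \<psi>1_def)
  have nsgn: "norm x *\<^sub>R sgn x = x" for x :: "real^'n"
    by (cases "x = 0") (simp_all add: sgn_div_norm)
  have rd': "radial_d u = (\<lambda>x. \<Sum>b\<in>Basis. (sgn x \<bullet> b) * D [b] x)"
    by (rule ext) (simp add: rd wv_def nsgn)
  have rdd': "radial_dd u = (\<lambda>x. \<Sum>b\<in>Basis. (sgn x \<bullet> b) * (\<Sum>c\<in>Basis. (sgn x \<bullet> c) * D [c, b] x))"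
    by (rule ext) (simp add: rdd w1v_def nsgn)
  have [measurable]: "radial_d u \<in> borel_measurable borel" unfolding rd' by measurable
  have [measurable]: "radial_dd u \<in> borel_measurable borel" unfolding rdd' by measurable
  define dens where "dens = (\<lambda>x::real^'n. (\<psi> (norm x) / norm x) ^ n)"
  have dens0: "dens x \<ge> 0" for x unfolding dens_def using nonneg by simp
  define g1 where "g1 = (\<lambda>x. dens x * (radial_laplacian \<psi> (\<Psi> 1) u x)\<^sup>2)"
  define g2 where "g2 = (\<lambda>x. dens x * (radial_d u x)\<^sup>2)"
  define g3 where "g3 = (\<lambda>x. dens x * ((1 / (norm x)\<^sup>2) * (radial_d u x)\<^sup>2))"
  define g4 where "g4 = (\<lambda>x. dens x * ((1 / (\<psi> (norm x))\<^sup>2) * (radial_d u x)\<^sup>2))"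
  define c2 where "c2 = ((real CARD('n) - 1) / 2)\<^sup>2"
  define c3 where "c3 = (1 / 4 :: real)"
  define c4 where "c4 = ((real CARD('n))\<^sup>2 - 1) / 4"
  have c2p: "c2 > 0" and c3p: "c3 > 0" and c4p: "c4 > 0" using N3 by (auto simp: c2_def c3_def c4_def)
  define gQ where "gQ = (\<lambda>x. c2 * g2 x + c3 * g3 x + c4 * g4 x)"
  have [measurable]: "dens \<in> borel_measurable borel" unfolding dens_def by measurable
  have [measurable]: "g1 \<in> borel_measurable borel" unfolding g1_def radial_laplacian_def by measurable
  have [measurable]: "g2 \<in> borel_measurable borel" unfolding g2_def by measurable
  have [measurable]: "g3 \<in> borel_measurable borel" unfolding g3_def by measurable
  have [measurable]: "g4 \<in> borel_measurable borel" unfolding g4_def by measurable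
  have [measurable]: "gQ \<in> borel_measurable borel" unfolding gQ_def by measurable
  have g1p: "g1 x \<ge> 0" and g2p: "g2 x \<ge> 0" and g3p: "g3 x \<ge> 0" and g4p: "g4 x \<ge> 0" for x
    using dens0[of x] by (auto simp: g1_def g2_def g3_def g4_def)
  have gQp: "gQ x \<ge> 0" for x using g2p g3p g4p c2p c3p c4p unfolding gQ_def
    by (intro add_nonneg_nonneg mult_nonneg_nonneg) (auto intro: less_imp_le)

  have nrw: "norm (r *\<^sub>R \<omega>) = r" "sgn (r *\<^sub>R \<omega>) = \<omega>" if "norm \<omega> = 1" "r > 0" for r and \<omega> :: "real^'n"
    using that by (auto simp: sgn_scaleR sgn_div_norm)
  have ptP: "g1 (r *\<^sub>R \<omega>) * (r / \<rho>) ^ n = Pd \<omega> r / \<rho> ^ n" if "norm \<omega> = 1" "r > 0" for r \<rho> and \<omega> :: "real^'n"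
  proof -
    have L: "radial_laplacian \<psi> (\<Psi> 1) u (r *\<^sub>R \<omega>) = w1v \<omega> r + real n * (\<psi>1 r / \<psi> r) * wv \<omega> r"
      unfolding radial_laplacian_def rd rdd nrw[OF that] DIMn \<psi>1_def by simp
    show ?thesis unfolding g1_def dens_def L nrw[OF that] Pd_def
      using that by (simp add: power_divide field_simps)
  qed
  have ptQ: "gQ (r *\<^sub>R \<omega>) * (r / \<rho>) ^ n = Qd \<omega> r / \<rho> ^ n" if "norm \<omega> = 1" "r > 0" for r \<rho> and \<omega> :: "real^'n"
  proof -
    have "gQ (r *\<^sub>R \<omega>) = (\<psi> r / r) ^ n * (wv \<omega> r)\<^sup>2 * ((real n / 2)\<^sup>2 + 1 / (4 * r\<^sup>2) + ((real n + 1)\<^sup>2 - 1) / (4 * (\<psi> r)\<^sup>2))"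
      unfolding gQ_def g2_def g3_def g4_def dens_def rd nrw[OF that] c2_def c3_def c4_def Nn
      by (simp add: algebra_simps)
    then show ?thesis unfolding Qd_def
      using that by (simp add: power_divide)
  qed

  have rayP: "(\<integral>\<^sup>+t. indicator {0<..} t * ennreal (g1 (t *\<^sub>R y)) * ennreal (t ^ (DIM(real^'n) - 1)) \<partial>lborel)
      = ennreal (1 / norm y) * ((\<integral>\<^sup>+r. indicator {0<..} r * ennreal (Pd (sgn y) r) \<partial>lborel) * ennreal (1 / norm y ^ n))"
    if y: "y \<noteq> 0" for y
    unfolding DIMn by (rule ray_sub2) (use y g1p ptP[of "sgn y"] in \<open>auto simp: norm_sgn\<close>)
  have rayQ: "(\<integral>\<^sup>+t. indicator {0<..} t * ennreal (gQ (t *\<^sub>R y)) * ennreal (t ^ (DIM(real^'n) - 1)) \<partial>lborel)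
      = ennreal (1 / norm y) * ((\<integral>\<^sup>+r. indicator {0<..} r * ennreal (Qd (sgn y) r) \<partial>lborel) * ennreal (1 / norm y ^ n))"
    if y: "y \<noteq> 0" for y
    unfolding DIMn by (rule ray_sub2) (use y gQp ptQ[of "sgn y"] in \<open>auto simp: norm_sgn\<close>)
  define A where "A = {y::real^'n. 1 \<le> norm y \<and> norm y \<le> 2}"
  have [measurable]: "A \<in> sets borel" unfolding A_def by measurable
  have RP: "(\<integral>\<^sup>+x. ennreal (g1 x) \<partial>lborel) * ennreal (ln 2) =
    (\<integral>\<^sup>+y. indicator A y * (\<integral>\<^sup>+t. indicator {0<..} t * ennreal (g1 (t *\<^sub>R y)) * ennreal (t ^ (DIM(real^'n) - 1)) \<partial>lborel) \<partial>lborel)"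
    unfolding A_def by (rule ray_formula) measurable
  have RQ: "(\<integral>\<^sup>+x. ennreal (gQ x) \<partial>lborel) * ennreal (ln 2) =
    (\<integral>\<^sup>+y. indicator A y * (\<integral>\<^sup>+t. indicator {0<..} t * ennreal (gQ (t *\<^sub>R y)) * ennreal (t ^ (DIM(real^'n) - 1)) \<partial>lborel) \<partial>lborel)"
    unfolding A_def by (rule ray_formula) measurable
  have QleP: "(\<integral>\<^sup>+x. ennreal (gQ x) \<partial>lborel) * ennreal (ln 2) \<le> (\<integral>\<^sup>+x. ennreal (g1 x) \<partial>lborel) * ennreal (ln 2)"
    unfolding RP RQ
  proof (rule nn_integral_mono)
    fix y :: "real^'n"
    show "indicator A y * (\<integral>\<^sup>+t. indicator {0<..} t * ennreal (gQ (t *\<^sub>R y)) * ennreal (t ^ (DIM(real^'n) - 1)) \<partial>lborel)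
       \<le> indicator A y * (\<integral>\<^sup>+t. indicator {0<..} t * ennreal (g1 (t *\<^sub>R y)) * ennreal (t ^ (DIM(real^'n) - 1)) \<partial>lborel)"
    proof (cases "y \<in> A")
      case True
      then have y: "y \<noteq> 0" by (auto simp: A_def)
      have ns: "norm (sgn y) = 1" using y by (simp add: norm_sgn)
      show ?thesis unfolding rayP[OF y] rayQ[OF y]
        using conjunct1[OF one[OF ns]] by (intro mult_left_mono mult_right_mono) auto
    qed simp
  qed
  have Pfin: "(\<integral>\<^sup>+x. ennreal (g1 x) \<partial>lborel) * ennreal (ln 2) \<le> ennreal Kc * emeasure lborel A"
  proof -
    have "(\<integral>\<^sup>+x. ennreal (g1 x) \<partial>lborel) * ennreal (ln 2) \<le> (\<integral>\<^sup>+y. ennreal Kc * indicator A y \<partial>lborel)"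
      unfolding RP
    proof (rule nn_integral_mono)
      fix y :: "real^'n"
      show "indicator A y * (\<integral>\<^sup>+t. indicator {0<..} t * ennreal (g1 (t *\<^sub>R y)) * ennreal (t ^ (DIM(real^'n) - 1)) \<partial>lborel)
         \<le> ennreal Kc * indicator A y"
      proof (cases "y \<in> A")
        case True
        then have y: "y \<noteq> 0" and y1: "norm y \<ge> 1" by (auto simp: A_def)
        have ns: "norm (sgn y) = 1" using y by (simp add: norm_sgn)
        have a: "ennreal (1 / norm y) \<le> 1" using y1 by (simp add: ennreal_le_1 divide_le_eq_1)
        have b: "ennreal (1 / norm y ^ n) \<le> 1" using y1 y by (simp add: ennreal_le_1 one_le_power divide_le_eq_1)
        have "ennreal (1 / norm y) * ((\<integral>\<^sup>+r. indicator {0<..} r * ennreal (Pd (sgn y) r) \<partial>lborel) * ennreal (1 / norm y ^ n))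
            \<le> 1 * (ennreal Kc * 1)"
          using a b conjunct2[OF one[OF ns]] by (intro mult_mono) auto
        then show ?thesis unfolding rayP[OF y] using True by simp
      qed simp
    qed
    also have "\<dots> = ennreal Kc * emeasure lborel A" by (rule nn_integral_cmult_indicator) simp
    finally show ?thesis .
  qed
  have Afin: "emeasure lborel A < \<infinity>"
    by (rule emeasure_bounded_finite) (auto simp: A_def bounded_iff)
  have ln2: "ennreal (ln 2) \<noteq> 0" "ennreal (ln 2) \<noteq> top" by auto
  have JQP: "(\<integral>\<^sup>+x. ennreal (gQ x) \<partial>lborel) \<le> (\<integral>\<^sup>+x. ennreal (g1 x) \<partial>lborel)"
    using QleP ennreal_mult_le_mult_iff[OF ln2] by (simp add: mult.commute)
  have JPfin: "(\<integral>\<^sup>+x. ennreal (g1 x) \<partial>lborel) < top"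
  proof -
    have "(\<integral>\<^sup>+x. ennreal (g1 x) \<partial>lborel) * ennreal (ln 2) < top"
      using Pfin Afin by (metis ennreal_less_top ennreal_mult_less_top infinity_ennreal_def le_less_trans)
    then show ?thesis using ln2 by (auto simp: ennreal_mult_less_top)
  qed

  have mv: "integral\<^sup>L (model_vol \<psi>) f = enn2real (\<integral>\<^sup>+x. ennreal (dens x * f x) \<partial>lborel)"
    if fm: "f \<in> borel_measurable borel" and f0: "\<And>x. f x \<ge> 0" for f :: "real^'n \<Rightarrow> real"
  proof -
    have mvd: "model_vol \<psi> = density lborel (\<lambda>x. ennreal (dens x))"
      unfolding model_vol_def dens_def DIMn ..
    have "integral\<^sup>L (model_vol \<psi>) f = enn2real (\<integral>\<^sup>+x. ennreal (f x) \<partial>model_vol \<psi>)"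
      unfolding mvd by (rule integral_eq_nn_integral) (use fm f0 in auto)
    also have "(\<integral>\<^sup>+x. ennreal (f x) \<partial>model_vol \<psi>) = (\<integral>\<^sup>+x. ennreal (dens x) * ennreal (f x) \<partial>lborel)"
      unfolding mvd by (rule nn_integral_density) (use fm in auto)
    also have "\<dots> = (\<integral>\<^sup>+x. ennreal (dens x * f x) \<partial>lborel)"
      using dens0 f0 by (simp add: ennreal_mult)
    finally show ?thesis .
  qed
  define J1 where "J1 = (\<integral>\<^sup>+x. ennreal (g1 x) \<partial>lborel)"
  define J2 where "J2 = (\<integral>\<^sup>+x. ennreal (g2 x) \<partial>lborel)"
  define J3 where "J3 = (\<integral>\<^sup>+x. ennreal (g3 x) \<partial>lborel)"
  define J4 where "J4 = (\<integral>\<^sup>+x. ennreal (g4 x) \<partial>lborel)"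
  have I1: "(\<integral>x. (radial_laplacian \<psi> (\<Psi> 1) u x)\<^sup>2 \<partial>model_vol \<psi>) = enn2real J1"
  proof -
    have [measurable]: "radial_laplacian \<psi> (\<Psi> 1) u \<in> borel_measurable borel"
      unfolding radial_laplacian_def[abs_def] by measurable
    have "(\<lambda>x. (radial_laplacian \<psi> (\<Psi> 1) u x)\<^sup>2) \<in> borel_measurable borel" by measurable
    then show ?thesis unfolding J1_def g1_def by (rule mv) simp
  qed
  have I2: "(\<integral>x. (radial_d u x)\<^sup>2 \<partial>model_vol \<psi>) = enn2real J2"
    unfolding J2_def g2_def by (rule mv) auto
  have I3: "(\<integral>x. (1 / (norm x)\<^sup>2) * (radial_d u x)\<^sup>2 \<partial>model_vol \<psi>) = enn2real J3"
    unfolding J3_def g3_def by (rule mv) auto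
  have I4: "(\<integral>x. (1 / (\<psi> (norm x))\<^sup>2) * (radial_d u x)\<^sup>2 \<partial>model_vol \<psi>) = enn2real J4"
    unfolding J4_def g4_def by (rule mv) auto
  have JQ: "(\<integral>\<^sup>+x. ennreal (gQ x) \<partial>lborel) = ennreal c2 * J2 + ennreal c3 * J3 + ennreal c4 * J4"
  proof -
    have "(\<integral>\<^sup>+x. ennreal (gQ x) \<partial>lborel) = (\<integral>\<^sup>+x. ennreal c2 * ennreal (g2 x) + ennreal c3 * ennreal (g3 x) + ennreal c4 * ennreal (g4 x) \<partial>lborel)"
      using g2p g3p g4p c2p c3p c4p
      by (intro nn_integral_cong) (simp add: gQ_def ennreal_plus ennreal_mult add_nonneg_nonneg)
    also have "\<dots> = ennreal c2 * J2 + ennreal c3 * J3 + ennreal c4 * J4"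
      unfolding J2_def J3_def J4_def
      by (simp add: nn_integral_add nn_integral_cmult)
    finally show ?thesis .
  qed
  have sumfin: "ennreal c2 * J2 + ennreal c3 * J3 + ennreal c4 * J4 < top"
    using JQP JPfin unfolding JQ J1_def by (rule le_less_trans)
  have J2f: "J2 < top" and J3f: "J3 < top" and J4f: "J4 < top"
    using sumfin c2p c3p c4p by (auto simp: ennreal_mult_less_top top_unique)
  have "c2 * enn2real J2 + c3 * enn2real J3 + c4 * enn2real J4 = enn2real (ennreal c2 * J2 + ennreal c3 * J3 + ennreal c4 * J4)"
    using J2f J3f J4f c2p c3p c4p
    by (simp add: enn2real_plus enn2real_mult ennreal_mult_less_top)
  also have "\<dots> \<le> enn2real J1"
    using JQP JPfin unfolding JQ J1_def by (rule enn2real_mono)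
  finally have fin: "c2 * enn2real J2 + c3 * enn2real J3 + c4 * enn2real J4 \<le> enn2real J1" .
  show ?thesis unfolding I1 I2 I3 I4 using fin unfolding c2_def c3_def c4_def by linarith
qed

end
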